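(* Let $\gamma(t)=\Phi(e^{it})$ be an analytic Jordan curve and $k\in\{0,1,2,\dots\}\cup\{\infty\}$. Then the set of $f\in C^k(\gamma^* )$ that are nowhere real analytic on $\gamma^*$ (i.e. real analytic at no point $\gamma(t_0)$, $t_0\in\mathbb{R}$) is a dense $G_\delta$ subset of $C^k(\gamma^* )$.
   Context: An analytic Jordan curve is $\gamma(t)=\Phi(e^{it})$, $t\in\mathbb{R}$, with $\Phi$ injective holomorphic on an annulus $\{\rho<|z|<R\}$, $0<\rho<1<R$; $\gamma^*$ is its image. $C^k(\gamma^* )$ is the space of $u:\gamma^*\to\mathbb{C}$ such that $\theta\mapsto u(\gamma(\theta))$ is $k$ times continuously differentiable on $\mathbb{R}$, with seminorms $\sup_{\theta\in\mathbb{R}}|\frac{d^l}{d\theta^l}u(\gamma(\theta))|$, integers $0\le l\le k$. A function $f:\gamma^*\to\mathbb{C}$ is real analytic at $\gamma(t_0)$ if there is a power series $\sum_{n\ge0}a_n(t-t_0)^n$ with radius of convergence $\delta>0$ such that $f(\gamma(t))=\sum_{n\ge0}a_n(t-t_0)^n$ for all $t\in(t_0-\delta,t_0+\delta)$. *)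

theory Defs
  imports "HOL-Analysis.Analysis" "HOL-Library.Extended_Nat"
begin

definition analytic_jordan_curve :: "(real \<Rightarrow> complex) \<Rightarrow> bool" where
  "analytic_jordan_curve \<gamma> \<longleftrightarrow>
     (\<exists>\<Phi> \<rho> R. 0 < \<rho> \<and> \<rho> < 1 \<and> 1 < R \<and>
        \<Phi> holomorphic_on {z. \<rho> < cmod z \<and> cmod z < R} \<and>
        inj_on \<Phi> {z. \<rho> < cmod z \<and> cmod z < R} \<and>
        (\<forall>t. \<gamma> t = \<Phi> (exp (\<i> * complex_of_real t))))"

fun iter_deriv :: "nat \<Rightarrow> (real \<Rightarrow> complex) \<Rightarrow> real \<Rightarrow> complex" where
  "iter_deriv 0 g = g"
| "iter_deriv (Suc n) g = (\<lambda>t. vector_derivative (iter_deriv n g) (at t))"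

definition Ck_real :: "enat \<Rightarrow> (real \<Rightarrow> complex) \<Rightarrow> bool" where
  "Ck_real k g \<longleftrightarrow>
     (\<forall>l. enat l \<le> k \<longrightarrow> continuous_on UNIV (iter_deriv l g)) \<and>
     (\<forall>l. enat (Suc l) \<le> k \<longrightarrow>
        (\<forall>t. (iter_deriv l g has_vector_derivative iter_deriv (Suc l) g t) (at t)))"

text \<open>The space C^k(gamma*): functions on gamma* (represented as functions on
  the complex plane that vanish off gamma*, so that each function on gamma*
  has exactly one representative) with theta |-> u (gamma theta) of class C^k.\<close>
definition Ck_curve :: "enat \<Rightarrow> (real \<Rightarrow> complex) \<Rightarrow> (complex \<Rightarrow> complex) set" where
  "Ck_curve k \<gamma> = {u. (\<forall>z. z \<notin> range \<gamma> \<longrightarrow> u z = 0) \<and> Ck_real k (\<lambda>\<theta>. u (\<gamma> \<theta>))}"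

definition seminorm_curve :: "(real \<Rightarrow> complex) \<Rightarrow> nat \<Rightarrow> (complex \<Rightarrow> complex) \<Rightarrow> real" where
  "seminorm_curve \<gamma> l u = (SUP \<theta>. norm (iter_deriv l (\<lambda>t. u (\<gamma> t)) \<theta>))"

definition Ck_nbhd :: "enat \<Rightarrow> (real \<Rightarrow> complex) \<Rightarrow> (complex \<Rightarrow> complex) \<Rightarrow> nat \<Rightarrow> real
    \<Rightarrow> (complex \<Rightarrow> complex) set" where
  "Ck_nbhd k \<gamma> u N \<epsilon> = {v \<in> Ck_curve k \<gamma>.
      \<forall>l. l \<le> N \<and> enat l \<le> k \<longrightarrow> seminorm_curve \<gamma> l (\<lambda>z. v z - u z) < \<epsilon>}"

definition Ck_open :: "enat \<Rightarrow> (real \<Rightarrow> complex) \<Rightarrow> (complex \<Rightarrow> complex) set \<Rightarrow> bool" where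
  "Ck_open k \<gamma> U \<longleftrightarrow> U \<subseteq> Ck_curve k \<gamma> \<and>
     (\<forall>u\<in>U. \<exists>N \<epsilon>. 0 < \<epsilon> \<and> Ck_nbhd k \<gamma> u N \<epsilon> \<subseteq> U)"

lemma istopology_Ck_open: "istopology (Ck_open k \<gamma>)"
  unfolding istopology_def
proof (intro conjI allI impI ballI)
  fix S T assume S: "Ck_open k \<gamma> S" and T: "Ck_open k \<gamma> T"
  show "Ck_open k \<gamma> (S \<inter> T)"
    unfolding Ck_open_def
  proof (intro conjI ballI)
    show "S \<inter> T \<subseteq> Ck_curve k \<gamma>" using S unfolding Ck_open_def by blast
  next
    fix u assume u: "u \<in> S \<inter> T"
    obtain N1 e1 where 1: "0 < e1" "Ck_nbhd k \<gamma> u N1 e1 \<subseteq> S"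
      using S u unfolding Ck_open_def by blast
    obtain N2 e2 where 2: "0 < e2" "Ck_nbhd k \<gamma> u N2 e2 \<subseteq> T"
      using T u unfolding Ck_open_def by blast
    have "Ck_nbhd k \<gamma> u (max N1 N2) (min e1 e2) \<subseteq> Ck_nbhd k \<gamma> u N1 e1"
         "Ck_nbhd k \<gamma> u (max N1 N2) (min e1 e2) \<subseteq> Ck_nbhd k \<gamma> u N2 e2"
      unfolding Ck_nbhd_def by (auto simp del: max_def)
    then have "Ck_nbhd k \<gamma> u (max N1 N2) (min e1 e2) \<subseteq> S \<inter> T"
      using 1 2 by blast
    moreover have "0 < min e1 e2" using 1 2 by simp
    ultimately show "\<exists>N \<epsilon>. 0 < \<epsilon> \<and> Ck_nbhd k \<gamma> u N \<epsilon> \<subseteq> S \<inter> T"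
      by blast
  qed
next
  fix K assume K: "\<forall>S\<in>K. Ck_open k \<gamma> S"
  show "Ck_open k \<gamma> (\<Union>K)"
    unfolding Ck_open_def
  proof (intro conjI ballI)
    show "\<Union>K \<subseteq> Ck_curve k \<gamma>" using K unfolding Ck_open_def by blast
  next
    fix u assume "u \<in> \<Union>K"
    then obtain S where S: "S \<in> K" "u \<in> S" by blast
    then have "Ck_open k \<gamma> S" using K by blast
    then obtain N \<epsilon> where "0 < \<epsilon>" "Ck_nbhd k \<gamma> u N \<epsilon> \<subseteq> S"
      using S(2) unfolding Ck_open_def by blast
    then have "0 < \<epsilon> \<and> Ck_nbhd k \<gamma> u N \<epsilon> \<subseteq> \<Union>K" using S(1) by blast
    then show "\<exists>N \<epsilon>. 0 < \<epsilon> \<and> Ck_nbhd k \<gamma> u N \<epsilon> \<subseteq> \<Union>K"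
      by blast
  qed
qed

definition Ck_topology :: "enat \<Rightarrow> (real \<Rightarrow> complex) \<Rightarrow> (complex \<Rightarrow> complex) topology" where
  "Ck_topology k \<gamma> = topology (Ck_open k \<gamma>)"

lemma openin_Ck_topology: "openin (Ck_topology k \<gamma>) U \<longleftrightarrow> Ck_open k \<gamma> U"
  unfolding Ck_topology_def using istopology_Ck_open by (simp add: topology_inverse')

definition real_analytic_at_curve ::
    "(real \<Rightarrow> complex) \<Rightarrow> (complex \<Rightarrow> complex) \<Rightarrow> real \<Rightarrow> bool" where
  "real_analytic_at_curve \<gamma> f t0 \<longleftrightarrow>
     (\<exists>a :: nat \<Rightarrow> complex. \<exists>\<delta>>0. \<forall>t. \<bar>t - t0\<bar> < \<delta> \<longrightarrow>
        (\<lambda>n. a n * complex_of_real ((t - t0) ^ n)) sums f (\<gamma> t))"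

end

theory Submission
  imports Defs "HOL-Complex_Analysis.Complex_Analysis"
begin


definition periodic2pi :: "(real \<Rightarrow> 'a) \<Rightarrow> bool" where
  "periodic2pi h \<longleftrightarrow> (\<forall>t. h (t + 2*pi) = h t)"

lemma exp_ii_periodic: "exp (\<i> * complex_of_real (t + 2*pi)) = exp (\<i> * complex_of_real t)"
proof -
  have e: "\<i> * complex_of_real (t + 2*pi) = \<i> * complex_of_real t + 2 * pi * \<i>"
    by (simp add: algebra_simps)
  have "exp (\<i> * complex_of_real (t + 2*pi)) = exp (\<i> * complex_of_real t) * exp (2 * pi * \<i>)"
    unfolding e by (rule exp_add)
  then show ?thesis by simp
qed

lemma jordan_periodic:
  assumes "analytic_jordan_curve \<gamma>"
  shows "\<gamma> (t + 2*pi) = \<gamma> t"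
  using assms exp_ii_periodic unfolding analytic_jordan_curve_def by metis

lemma jordan_inj:
  assumes "analytic_jordan_curve \<gamma>" "\<gamma> s = \<gamma> t"
  shows "\<exists>n::int. s = t + 2 * pi * of_int n"
proof -
  obtain \<Phi> \<rho> R where r: "0 < \<rho>" "\<rho> < 1" "1 < R"
    and inj: "inj_on \<Phi> {z. \<rho> < cmod z \<and> cmod z < R}"
    and g: "\<forall>t. \<gamma> t = \<Phi> (exp (\<i> * complex_of_real t))"
    using assms(1) unfolding analytic_jordan_curve_def by blast
  have n1: "cmod (exp (\<i> * complex_of_real x)) = 1" for x
    by (simp add: norm_exp_eq_Re)
  have "exp (\<i> * complex_of_real s) = exp (\<i> * complex_of_real t)"
    using inj_onD[OF inj, of "exp (\<i> * complex_of_real s)" "exp (\<i> * complex_of_real t)"]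
      assms(2) g r n1 by auto
  then obtain n::int where "\<i> * complex_of_real s = \<i> * complex_of_real t + (of_int (2 * n) * pi) * \<i>"
    by (auto simp: exp_eq)
  then have "Im (\<i> * complex_of_real s) = Im (\<i> * complex_of_real t + (of_int (2 * n) * pi) * \<i>)"
    by simp
  then have "s = t + 2 * pi * of_int n" by simp
  then show ?thesis by blast
qed

lemma periodic_nat:
  assumes "periodic2pi h"
  shows "h (t + 2 * pi * real n) = h t"
proof (induction n)
  case 0 then show ?case by simp
next
  case (Suc n)
  have "h (t + 2 * pi * real (Suc n)) = h ((t + 2 * pi * real n) + 2*pi)"
    by (simp add: algebra_simps)
  also have "\<dots> = h (t + 2 * pi * real n)" using assms unfolding periodic2pi_def by blast
  finally show ?case using Suc by simp
qed

lemma periodic_int: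
  assumes "periodic2pi h"
  shows "h (t + 2 * pi * of_int n) = h t"
proof (cases "n \<ge> 0")
  case True
  then obtain k::nat where "n = int k" by (metis nonneg_eq_int)
  then show ?thesis using periodic_nat[OF assms] by simp
next
  case False
  then obtain k::nat where k: "n = - int k" by (metis neg_int_cases linorder_not_le order_less_imp_le)
  have "h t = h ((t + 2 * pi * of_int n) + 2 * pi * real k)"
    using k by simp
  also have "\<dots> = h (t + 2 * pi * of_int n)" using periodic_nat[OF assms] by blast
  finally show ?thesis by simp
qed

lemma reduce_period: "\<exists>n::int. t - 2 * pi * of_int n \<in> {0..<2*pi}"
proof -
  define n where "n = \<lfloor>t / (2*pi)\<rfloor>"
  have "of_int n \<le> t / (2*pi)" "t / (2*pi) < of_int n + 1"
    unfolding n_def by linarith+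
  then have "2*pi * of_int n \<le> t" "t < 2*pi * of_int n + 2*pi"
    using pi_gt_zero by (simp_all add: field_simps)
  then show ?thesis by (intro exI[of _ n]) auto
qed

lemma periodic_bounded:
  fixes h :: "real \<Rightarrow> 'a::real_normed_vector"
  assumes "periodic2pi h" "continuous_on UNIV h"
  shows "\<exists>B. \<forall>t. norm (h t) \<le> B"
proof -
  have "compact (h ` {0..2*pi})"
    by (rule compact_continuous_image) (use assms(2) continuous_on_subset in auto)
  then obtain B where B: "\<And>x. x \<in> h ` {0..2*pi} \<Longrightarrow> norm x \<le> B"
    using compact_imp_bounded bounded_iff by metis
  have "norm (h t) \<le> B" for t
  proof -
    obtain n::int where n: "t - 2 * pi * of_int n \<in> {0..<2*pi}" using reduce_period by blast
    have "h t = h ((t - 2 * pi * of_int n) + 2 * pi * of_int n)" by simp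
    also have "\<dots> = h (t - 2 * pi * of_int n)" by (rule periodic_int[OF assms(1)])
    finally show ?thesis using B n by auto
  qed
  then show ?thesis by blast
qed

definition lift :: "(real \<Rightarrow> complex) \<Rightarrow> (real \<Rightarrow> complex) \<Rightarrow> complex \<Rightarrow> complex" where
  "lift \<gamma> g z = (if z \<in> range \<gamma> then g (SOME t. \<gamma> t = z) else 0)"

lemma lift_eq:
  assumes "analytic_jordan_curve \<gamma>" "periodic2pi g"
  shows "lift \<gamma> g (\<gamma> t) = g t"
proof -
  have "\<gamma> (SOME s. \<gamma> s = \<gamma> t) = \<gamma> t" by (rule someI) simp
  then obtain n::int where "(SOME s. \<gamma> s = \<gamma> t) = t + 2 * pi * of_int n"
    using jordan_inj[OF assms(1)] by blast
  then show ?thesis unfolding lift_def using periodic_int[OF assms(2)] by auto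
qed

lemma lift_in_Ck:
  assumes "analytic_jordan_curve \<gamma>" "periodic2pi g" "Ck_real k g"
  shows "lift \<gamma> g \<in> Ck_curve k \<gamma>"
proof -
  have "(\<lambda>\<theta>. lift \<gamma> g (\<gamma> \<theta>)) = g" using lift_eq[OF assms(1,2)] by auto
  then show ?thesis using assms(3) unfolding Ck_curve_def lift_def by auto
qed

lemma Ck_curve_periodic:
  assumes "analytic_jordan_curve \<gamma>"
  shows "periodic2pi (\<lambda>t. u (\<gamma> t))"
  using jordan_periodic[OF assms] unfolding periodic2pi_def by simp

lemma iter_deriv_0 [simp]: "iter_deriv 0 g = g" by simp

lemma Ck_real_cont0: "Ck_real k g \<Longrightarrow> continuous_on UNIV g"
  unfolding Ck_real_def using iter_deriv_0 by (metis zero_enat_def zero_le)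

lemma Ck_real_add:
  assumes f: "Ck_real k f" and g: "Ck_real k g"
  shows "\<forall>l. enat l \<le> k \<longrightarrow> iter_deriv l (\<lambda>t. f t + g t) = (\<lambda>t. iter_deriv l f t + iter_deriv l g t)"
proof (intro allI impI)
  fix l assume "enat l \<le> k"
  then show "iter_deriv l (\<lambda>t. f t + g t) = (\<lambda>t. iter_deriv l f t + iter_deriv l g t)"
  proof (induction l)
    case 0 then show ?case by simp
  next
    case (Suc l)
    then have l: "enat l \<le> k" by (meson Suc_ile_eq order_less_imp_le)
    have "iter_deriv (Suc l) (\<lambda>t. f t + g t) = (\<lambda>t. vector_derivative (\<lambda>t. iter_deriv l f t + iter_deriv l g t) (at t))"
      using Suc.IH[OF l] by simp
    also have "\<dots> = (\<lambda>t. iter_deriv (Suc l) f t + iter_deriv (Suc l) g t)"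
    proof
      fix t
      have "((\<lambda>t. iter_deriv l f t + iter_deriv l g t) has_vector_derivative
              iter_deriv (Suc l) f t + iter_deriv (Suc l) g t) (at t)"
        using f g Suc.prems unfolding Ck_real_def by (intro has_vector_derivative_add) auto
      then show "vector_derivative (\<lambda>t. iter_deriv l f t + iter_deriv l g t) (at t) =
                 iter_deriv (Suc l) f t + iter_deriv (Suc l) g t"
        by (rule vector_derivative_at)
    qed
    finally show ?case .
  qed
qed

lemma Ck_real_add':
  assumes f: "Ck_real k f" and g: "Ck_real k g"
  shows "Ck_real k (\<lambda>t. f t + g t)"
  unfolding Ck_real_def
proof (intro conjI allI impI)
  fix l assume l: "enat l \<le> k"
  show "continuous_on UNIV (iter_deriv l (\<lambda>t. f t + g t))"
    using Ck_real_add[OF f g] l f g unfolding Ck_real_def by (auto intro!: continuous_on_add)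
next
  fix l t assume l: "enat (Suc l) \<le> k"
  then have l': "enat l \<le> k" by (meson Suc_ile_eq order_less_imp_le)
  show "(iter_deriv l (\<lambda>t. f t + g t) has_vector_derivative iter_deriv (Suc l) (\<lambda>t. f t + g t) t) (at t)"
    using Ck_real_add[OF f g] l l' f g unfolding Ck_real_def
    by (auto intro!: has_vector_derivative_add simp del: iter_deriv.simps)
qed



definition ee :: "nat \<Rightarrow> real \<Rightarrow> complex" where
  "ee N t = exp (\<i> * of_real (real N * t))"

definition ser :: "(nat \<Rightarrow> complex) \<Rightarrow> (nat \<Rightarrow> nat) \<Rightarrow> nat \<Rightarrow> real \<Rightarrow> complex" where
  "ser b N l t = (\<Sum>i. b i * (\<i> * of_nat (N i)) ^ l * ee (N i) t)"

lemma norm_ee [simp]: "norm (ee N t) = 1"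
  by (simp add: ee_def norm_exp_eq_Re)

lemma ee_periodic: "ee N (t + 2*pi) = ee N t"
proof -
  have e: "\<i> * of_real (real N * (t + 2*pi)) = \<i> * of_real (real N * t) + 2 * pi * \<i> * of_nat N"
    by (simp add: algebra_simps)
  have "ee N (t + 2*pi) = ee N t * exp (2 * pi * \<i> * of_nat N)"
    unfolding ee_def e by (rule exp_add)
  also have "exp (2 * pi * \<i> * of_nat N) = 1"
  proof -
    have "2 * pi * \<i> * of_nat N = of_nat N * (2 * pi * \<i>)" by simp
    then show ?thesis by (simp only: exp_of_nat_mult) simp
  qed
  finally show ?thesis by simp
qed

lemma ee_deriv: "(ee N has_vector_derivative (\<i> * of_nat N) * ee N t) (at t)"
proof -
  have "((\<lambda>z. exp (\<i> * of_nat N * z)) has_field_derivative (\<i> * of_nat N) * exp (\<i> * of_nat N * of_real t)) (at (of_real t))"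
    by (auto intro!: derivative_eq_intros)
  from has_vector_derivative_real_field[OF this]
  show ?thesis unfolding ee_def by (simp add: algebra_simps)
qed

lemma norm_ser_term: "norm (b i * (\<i> * of_nat (N i)) ^ l * ee (N i) t) = norm (b i) * real (N i) ^ l"
  by (simp add: norm_mult norm_power)

lemma ser_summable:
  assumes "summable (\<lambda>i. norm (b i) * real (N i) ^ l)"
  shows "summable (\<lambda>i. b i * (\<i> * of_nat (N i)) ^ l * ee (N i) t)"
  by (rule summable_norm_cancel, rule summable_comparison_test[OF _ assms]) (auto simp: norm_ser_term)

lemma ser_norm_le:
  assumes "summable (\<lambda>i. norm (b i) * real (N i) ^ l)"
  shows "norm (ser b N l t) \<le> (\<Sum>i. norm (b i) * real (N i) ^ l)"
proof -
  have "norm (ser b N l t) \<le> (\<Sum>i. norm (b i * (\<i> * of_nat (N i)) ^ l * ee (N i) t))"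
    unfolding ser_def by (rule summable_norm) (use assms in \<open>simp add: norm_ser_term\<close>)
  then show ?thesis by (simp add: norm_ser_term)
qed

lemma ser_deriv:
  assumes summ: "\<And>l. summable (\<lambda>i. norm (b i) * real (N i) ^ l)"
  shows "(ser b N l has_vector_derivative ser b N (Suc l) t) (at t)"
proof -
  define f where "f i t = b i * (\<i> * of_nat (N i)) ^ l * ee (N i) t" for i t
  define d where "d i t = b i * (\<i> * of_nat (N i)) ^ Suc l * ee (N i) t" for i t
  have fd: "(f i has_vector_derivative d i x) (at x)" for i x
  proof -
    have "((\<lambda>t. (b i * (\<i> * of_nat (N i)) ^ l) * ee (N i) t) has_vector_derivative
          (b i * (\<i> * of_nat (N i)) ^ l) * ((\<i> * of_nat (N i)) * ee (N i) x)) (at x)"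
      by (rule has_vector_derivative_mult_right[OF ee_deriv])
    then show ?thesis unfolding f_def d_def by (simp add: algebra_simps)
  qed
  have ul: "uniform_limit UNIV (\<lambda>n x. \<Sum>i<n. d i x) (\<lambda>x. \<Sum>i. d i x) sequentially"
    by (rule Weierstrass_m_test[OF _ summ[of "Suc l"]]) (simp only: d_def norm_ser_term order_refl)
  have "\<exists>g. \<forall>x\<in>UNIV. (\<lambda>n. f n x) sums (g x) \<and> (g has_derivative (\<lambda>h. h *\<^sub>R (\<Sum>i. d i x))) (at x within UNIV)"
  proof (rule has_derivative_series[where f' = "\<lambda>i x h. h *\<^sub>R d i x"])
    show "convex (UNIV :: real set)" by simp
    show "((f n) has_derivative (\<lambda>h. h *\<^sub>R d n x)) (at x within UNIV)" for n x
      using fd[of n x] unfolding has_vector_derivative_def by simp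
    show "(\<lambda>n. f n 0) sums (\<Sum>i. f i 0)"
      unfolding f_def by (rule summable_sums, rule ser_summable[OF summ])
    show "\<forall>\<^sub>F n in sequentially. \<forall>x\<in>UNIV. \<forall>h. norm ((\<Sum>i<n. h *\<^sub>R d i x) - h *\<^sub>R (\<Sum>i. d i x)) \<le> e * norm h"
      if "e > 0" for e
    proof -
      have "\<forall>\<^sub>F n in sequentially. \<forall>x\<in>UNIV. dist (\<Sum>i<n. d i x) (\<Sum>i. d i x) < e"
        using uniform_limitD[OF ul that] .
      then show ?thesis
      proof (rule eventually_mono)
        fix n assume H: "\<forall>x\<in>UNIV. dist (\<Sum>i<n. d i x) (\<Sum>i. d i x) < e"
        show "\<forall>x\<in>UNIV. \<forall>h. norm ((\<Sum>i<n. h *\<^sub>R d i x) - h *\<^sub>R (\<Sum>i. d i x)) \<le> e * norm h"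
        proof (intro ballI allI)
          fix x and h :: real
          have "norm ((\<Sum>i<n. h *\<^sub>R d i x) - h *\<^sub>R (\<Sum>i. d i x)) = \<bar>h\<bar> * norm ((\<Sum>i<n. d i x) - (\<Sum>i. d i x))"
            by (simp flip: scaleR_sum_right scaleR_diff_right)
          also have "\<dots> \<le> \<bar>h\<bar> * e"
            using H by (intro mult_left_mono) (auto simp: dist_norm less_imp_le)
          finally show "norm ((\<Sum>i<n. h *\<^sub>R d i x) - h *\<^sub>R (\<Sum>i. d i x)) \<le> e * norm h"
            by (simp add: mult.commute)
        qed
      qed
    qed
  qed simp
  then obtain g where g: "\<And>x. (\<lambda>n. f n x) sums (g x)" "\<And>x. (g has_derivative (\<lambda>h. h *\<^sub>R (\<Sum>i. d i x))) (at x)"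
    by auto
  have "g = ser b N l" unfolding ser_def f_def[symmetric] using g(1) sums_unique by (auto intro!: ext)
  moreover have "(\<Sum>i. d i t) = ser b N (Suc l) t" unfolding ser_def d_def ..
  ultimately show ?thesis using g(2)[of t] unfolding has_vector_derivative_def by simp
qed

lemma iter_deriv_ser:
  assumes summ: "\<And>l. summable (\<lambda>i. norm (b i) * real (N i) ^ l)"
  shows "iter_deriv l (ser b N 0) = ser b N l"
proof (induction l)
  case 0 then show ?case by simp
next
  case (Suc l)
  then show ?case using vector_derivative_at[OF ser_deriv[OF summ]] by (auto intro!: ext)
qed

lemma Ck_real_ser:
  assumes summ: "\<And>l. summable (\<lambda>i. norm (b i) * real (N i) ^ l)"
  shows "Ck_real k (ser b N 0)"
  unfolding Ck_real_def iter_deriv_ser[OF summ]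
proof (intro conjI allI impI)
  fix l
  show "continuous_on UNIV (ser b N l)"
    by (rule differentiable_imp_continuous_on)
       (use ser_deriv[OF summ] in \<open>auto simp: differentiable_on_def differentiable_def has_vector_derivative_def intro: has_derivative_at_withinI\<close>)
  fix t show "(ser b N l has_vector_derivative ser b N (Suc l) t) (at t)" by (rule ser_deriv[OF summ])
qed

lemma ser_periodic:
  assumes summ: "\<And>l. summable (\<lambda>i. norm (b i) * real (N i) ^ l)"
  shows "periodic2pi (ser b N 0)"
  unfolding periodic2pi_def ser_def by (simp only: ee_periodic) simp

lemma ser0_eq: "ser b N 0 t = (\<Sum>i. b i * ee (N i) t)"
  unfolding ser_def by simp



definition anal :: "nat \<Rightarrow> (real \<Rightarrow> complex) \<Rightarrow> bool" where
  "anal m h \<longleftrightarrow> (\<exists>t0\<in>{0..2*pi}. \<exists>a. (\<forall>n. norm (a n) \<le> real m ^ Suc n) \<and>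
     (\<forall>t. \<bar>t - t0\<bar> < 1 / (2 * real m) \<longrightarrow> (\<lambda>n. a n * of_real ((t - t0) ^ n)) sums h t))"

definition cbox_set :: "nat \<Rightarrow> (nat \<Rightarrow> complex) set" where
  "cbox_set m = {a. \<forall>n. norm (a n) \<le> real m ^ Suc n}"

lemma compact_cbox_set: "compact (cbox_set m)"
proof -
  have eq: "cbox_set m = PiE UNIV (\<lambda>n. cball 0 (real m ^ Suc n))"
    unfolding cbox_set_def by (auto simp: PiE_def extensional_def)
  have "compactin (product_topology (\<lambda>i. euclidean) UNIV) (PiE UNIV (\<lambda>n. cball (0::complex) (real m ^ Suc n)))"
    by (subst compactin_PiE) auto
  then show ?thesis unfolding eq euclidean_product_topology by simp
qed

lemma coord_tendsto:
  fixes x :: "nat \<Rightarrow> (nat \<Rightarrow> complex)"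
  assumes "x \<longlonglongrightarrow> A"
  shows "(\<lambda>j. x j n) \<longlonglongrightarrow> A n"
proof -
  have "isCont (\<lambda>a::nat\<Rightarrow>complex. a n) A"
    using continuous_on_product_coordinates[of n] by (metis UNIV_I continuous_on_eq_continuous_at open_UNIV)
  then show ?thesis using assms isCont_tendsto_compose by blast
qed

lemma geom_bound_summable:
  assumes "0 \<le> q" "q < 1"
  shows "summable (\<lambda>n. real m * q ^ n)"
  using assms by (intro summable_mult summable_geometric) auto

lemma term_bound:
  fixes a :: "nat \<Rightarrow> complex"
  assumes "norm (a n) \<le> real m ^ Suc n" "\<bar>x\<bar> \<le> \<rho>"
  shows "norm (a n * of_real (x ^ n)) \<le> real m * (real m * \<rho>) ^ n"
proof -
  have "norm (a n * of_real (x ^ n)) = norm (a n) * \<bar>x\<bar> ^ n" by (simp add: norm_mult norm_power)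
  also have "\<dots> \<le> real m ^ Suc n * \<rho> ^ n"
    using assms by (intro mult_mono power_mono) auto
  also have "\<dots> = real m * (real m * \<rho>) ^ n" by (simp add: power_mult_distrib)
  finally show ?thesis .
qed

lemma anal_limit:
  assumes m: "m > 0" and an: "\<And>j. anal m (\<phi> j)" and lim: "\<And>t. (\<lambda>j. \<phi> j t) \<longlonglongrightarrow> \<psi> t"
  shows "anal m \<psi>"
proof -
  have "\<forall>j. \<exists>p. fst p \<in> {0..2*pi} \<and> snd p \<in> cbox_set m \<and>
      (\<forall>t. \<bar>t - fst p\<bar> < 1 / (2 * real m) \<longrightarrow> (\<lambda>n. snd p n * of_real ((t - fst p) ^ n)) sums \<phi> j t)"
    using an unfolding anal_def cbox_set_def by fastforce
  then obtain x where x: "\<And>j. fst (x j) \<in> {0..2*pi}" "\<And>j. snd (x j) \<in> cbox_set m"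
    "\<And>j t. \<bar>t - fst (x j)\<bar> < 1 / (2 * real m) \<Longrightarrow> (\<lambda>n. snd (x j) n * of_real ((t - fst (x j)) ^ n)) sums \<phi> j t"
    by metis
  have "compact ({0..2*pi} \<times> cbox_set m)" by (intro compact_Times compact_cbox_set) simp
  then have "seq_compact ({0..2*pi} \<times> cbox_set m)" by (rule compact_imp_seq_compact)
  moreover have "\<forall>j. x j \<in> {0..2*pi} \<times> cbox_set m" using x by (simp add: mem_Times_iff)
  ultimately obtain l r where l: "l \<in> {0..2*pi} \<times> cbox_set m" and r: "strict_mono r" and
    lr: "(x \<circ> r) \<longlonglongrightarrow> l"
    unfolding seq_compact_def by metis
  obtain t0 A where lt: "l = (t0, A)" by (cases l)
  have t0: "t0 \<in> {0..2*pi}" and A: "A \<in> cbox_set m" using l lt by auto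
  have st: "(\<lambda>j. fst (x (r j))) \<longlonglongrightarrow> t0" using tendsto_fst[OF lr] lt by (simp add: o_def)
  show ?thesis unfolding anal_def
  proof (intro bexI[OF _ t0] exI[of _ A] conjI allI impI)
    show "norm (A n) \<le> real m ^ Suc n" for n using A unfolding cbox_set_def by blast
    fix t assume t: "\<bar>t - t0\<bar> < 1 / (2 * real m)"
    define \<rho> where "\<rho> = (\<bar>t - t0\<bar> + 1 / (2 * real m)) / 2"
    have \<rho>1: "\<bar>t - t0\<bar> < \<rho>" and \<rho>2: "\<rho> < 1 / (2 * real m)" using t unfolding \<rho>_def by auto
    have mq: "real m * \<rho> < 1" and mq0: "0 \<le> real m * \<rho>"
    proof -
      have "\<rho> * (2 * real m) < 1" using \<rho>2 m by (simp add: pos_less_divide_eq)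
      then show "real m * \<rho> < 1" by (simp add: algebra_simps)
      show "0 \<le> real m * \<rho>" unfolding \<rho>_def by simp
    qed
    define D where "D = {p :: real \<times> (nat \<Rightarrow> complex). \<bar>t - fst p\<bar> \<le> \<rho> \<and> snd p \<in> cbox_set m}"
    define \<Phi> where "\<Phi> p = (\<Sum>n. snd p n * of_real ((t - fst p) ^ n))" for p :: "real \<times> (nat \<Rightarrow> complex)"
    have bnd: "norm (snd p n * of_real ((t - fst p) ^ n)) \<le> real m * (real m * \<rho>) ^ n" if "p \<in> D" for p n
      using that unfolding D_def cbox_set_def by (intro term_bound) auto
    have ul: "uniform_limit D (\<lambda>n p. \<Sum>i<n. snd p i * of_real ((t - fst p) ^ i)) \<Phi> sequentially"
      unfolding \<Phi>_def by (rule Weierstrass_m_test[OF bnd geom_bound_summable[OF mq0 mq]])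
    have cc: "continuous_on UNIV (\<lambda>p::real \<times> (nat \<Rightarrow> complex). snd p i)" for i
      by (rule continuous_on_compose2[OF continuous_on_product_coordinates continuous_on_snd]) auto
    have "continuous_on D \<Phi>"
    proof (rule uniform_limit_theorem[OF _ ul])
      show "\<forall>\<^sub>F n in sequentially. continuous_on D (\<lambda>p. \<Sum>i<n. snd p i * of_real ((t - fst p) ^ i))"
        by (intro always_eventually allI continuous_intros continuous_on_subset[OF cc]) auto
    qed simp
    moreover have lD: "l \<in> D" using lt A \<rho>1 unfolding D_def by auto
    moreover have ev: "\<forall>\<^sub>F j in sequentially. \<bar>t - fst (x (r j))\<bar> < \<rho>"
    proof -
      have "\<forall>\<^sub>F j in sequentially. dist (fst (x (r j))) t0 < \<rho> - \<bar>t - t0\<bar>"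
        using tendstoD[OF st] \<rho>1 by simp
      then show ?thesis by (rule eventually_mono) (auto simp: dist_real_def)
    qed
    moreover have "\<forall>\<^sub>F j in sequentially. (x \<circ> r) j \<in> D"
      using ev by (rule eventually_mono) (use x(2) in \<open>auto simp: D_def\<close>)
    ultimately have lim1: "(\<lambda>j. \<Phi> ((x \<circ> r) j)) \<longlonglongrightarrow> \<Phi> l"
      using continuous_on_tendsto_compose[OF _ lr] by blast
    have "\<forall>\<^sub>F j in sequentially. \<Phi> ((x \<circ> r) j) = \<phi> (r j) t"
    proof (rule eventually_mono[OF ev])
      fix j assume "\<bar>t - fst (x (r j))\<bar> < \<rho>"
      then have "\<bar>t - fst (x (r j))\<bar> < 1 / (2 * real m)" using \<rho>2 by linarith
      from sums_unique[OF x(3)[OF this]] show "\<Phi> ((x \<circ> r) j) = \<phi> (r j) t"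
        unfolding \<Phi>_def o_def by (rule sym)
    qed
    then have "(\<lambda>j. \<phi> (r j) t) \<longlonglongrightarrow> \<Phi> l" using lim1 tendsto_cong by fastforce
    moreover have "(\<lambda>j. \<phi> (r j) t) \<longlonglongrightarrow> \<psi> t"
      using LIMSEQ_subseq_LIMSEQ[OF lim[of t] r] by (simp add: o_def)
    ultimately have eq: "\<psi> t = \<Phi> l" using LIMSEQ_unique by blast
    have b2: "norm (A n * of_real ((t - t0) ^ n)) \<le> real m * (real m * \<rho>) ^ n" for n
      using bnd[OF lD, of n] unfolding lt by simp
    have "summable (\<lambda>n. norm (A n * of_real ((t - t0) ^ n)))"
      by (rule summable_comparison_test'[OF geom_bound_summable[OF mq0 mq]]) (use b2 in simp)
    then have sm: "summable (\<lambda>n. A n * of_real ((t - t0) ^ n))" by (rule summable_norm_cancel)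
    have "\<Phi> l = (\<Sum>n. A n * of_real ((t - t0) ^ n))" unfolding \<Phi>_def lt by simp
    then show "(\<lambda>n. A n * of_real ((t - t0) ^ n)) sums \<psi> t"
      using summable_sums[OF sm] eq by metis
  qed
qed

lemma anal_robust:
  assumes m: "m > 0" and na: "\<not> anal m h"
  shows "\<exists>e>0. \<forall>r. (\<forall>t. norm (r t) < e) \<longrightarrow> \<not> anal m (\<lambda>t. h t + r t)"
proof (rule ccontr)
  assume "\<not> ?thesis"
  then have "\<forall>j::nat. \<exists>r. (\<forall>t. norm (r t) < 1 / real (Suc j)) \<and> anal m (\<lambda>t. h t + r t)"
    by (metis of_nat_0_less_iff zero_less_Suc zero_less_divide_1_iff)
  then obtain r where r: "\<And>j t. norm (r j t) < 1 / real (Suc j)" "\<And>j. anal m (\<lambda>t. h t + r j t)"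
    by metis
  have "(\<lambda>j. h t + r j t) \<longlonglongrightarrow> h t" for t
  proof -
    have "(\<lambda>j. r j t) \<longlonglongrightarrow> 0"
    proof (rule Lim_null_comparison[OF _ LIMSEQ_inverse_real_of_nat])
      show "\<forall>\<^sub>F j in sequentially. norm (r j t) \<le> inverse (real (Suc j))"
        using r(1) by (simp add: less_imp_le field_simps)
    qed
    then show ?thesis using tendsto_add[of "\<lambda>_. h t" "h t"] by fastforce
  qed
  then have "anal m h" by (intro anal_limit[OF m r(2)])
  with na show False by blast
qed



lemma powser_summable:
  fixes a :: "nat \<Rightarrow> complex"
  assumes m: "m > 0" and a: "a \<in> cbox_set m" and w: "norm w \<le> d" and d: "real m * d < 1"
  shows "summable (\<lambda>n. norm (a n * w ^ n))" "summable (\<lambda>n. a n * w ^ n)"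
    "norm (\<Sum>n. a n * w ^ n) \<le> real m / (1 - real m * d)"
proof -
  have d0: "0 \<le> d" using w norm_ge_zero order_trans by blast
  have b: "norm (a n * w ^ n) \<le> real m * (real m * d) ^ n" for n
  proof -
    have "norm (a n * w ^ n) = norm (a n) * norm w ^ n" by (simp add: norm_mult norm_power)
    also have "\<dots> \<le> real m ^ Suc n * d ^ n"
      using a w unfolding cbox_set_def by (intro mult_mono power_mono) auto
    also have "\<dots> = real m * (real m * d) ^ n" by (simp add: power_mult_distrib)
    finally show ?thesis .
  qed
  have g: "summable (\<lambda>n. real m * (real m * d) ^ n)"
    using d d0 by (intro geom_bound_summable) auto
  show s1: "summable (\<lambda>n. norm (a n * w ^ n))"
    by (rule summable_comparison_test'[OF g]) (use b in simp)
  then show "summable (\<lambda>n. a n * w ^ n)" by (rule summable_norm_cancel)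
  have "norm (\<Sum>n. a n * w ^ n) \<le> (\<Sum>n. norm (a n * w ^ n))" by (rule summable_norm[OF s1])
  also have "\<dots> \<le> (\<Sum>n. real m * (real m * d) ^ n)" by (rule suminf_le[OF b s1 g])
  also have "\<dots> = real m * (1 / (1 - real m * d))"
    using d d0 by (subst suminf_mult[OF summable_geometric]) (auto simp: suminf_geometric)
  finally show "norm (\<Sum>n. a n * w ^ n) \<le> real m / (1 - real m * d)" by simp
qed

lemma powser_holo:
  fixes a :: "nat \<Rightarrow> complex"
  assumes m: "m > 0" and a: "a \<in> cbox_set m"
  shows "(\<lambda>z. \<Sum>n. a n * (z - c) ^ n) holomorphic_on ball c (1 / real m)"
proof -
  define F where "F w = (\<Sum>n. a n * w ^ n)" for w
  have sF: "summable (\<lambda>n. a n * w ^ n)" if "norm w < 1 / real m" for w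
  proof (rule powser_summable(2)[OF m a order_refl])
    show "real m * norm w < 1" using that m by (simp add: field_simps)
  qed
  have "F holomorphic_on ball 0 (1 / real m)"
    unfolding holomorphic_on_def
  proof
    fix w :: complex assume "w \<in> ball 0 (1 / real m)"
    then have "norm w < 1 / real m" by simp
    from termdiffs_strong'[of "1 / real m" a, OF sF this]
    show "F field_differentiable at w within ball 0 (1 / real m)"
      unfolding F_def field_differentiable_def by (auto intro: has_field_derivative_at_within)
  qed
  moreover have "(\<lambda>z. z - c) holomorphic_on ball c (1 / real m)" by (intro holomorphic_intros)
  moreover have "(\<lambda>z. z - c) ` ball c (1 / real m) \<subseteq> ball 0 (1 / real m)"
    by (auto simp: dist_norm norm_minus_commute)
  ultimately have "(F \<circ> (\<lambda>z. z - c)) holomorphic_on ball c (1 / real m)"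
    by (metis holomorphic_on_compose holomorphic_on_subset)
  then show ?thesis unfolding F_def o_def .
qed

lemma powser_real:
  fixes a :: "nat \<Rightarrow> complex"
  shows "(\<Sum>n. a n * (complex_of_real t - complex_of_real s) ^ n) = (\<Sum>n. a n * of_real ((t - s) ^ n))"
  by simp

lemma core:
  fixes a1 a2 :: "nat \<Rightarrow> complex"
  assumes m: "m > 0" and a1: "a1 \<in> cbox_set m" and a2: "a2 \<in> cbox_set m"
    and t12: "\<bar>t1 - t2\<bar> < 1 / (8 * real m)"
    and eq: "\<And>t. \<bar>t - t1\<bar> < 1 / (4 * real m) \<Longrightarrow>
       (\<Sum>n. a1 n * of_real ((t - t1) ^ n)) - (\<Sum>n. a2 n * of_real ((t - t2) ^ n)) = c * ee N t"
  shows "norm c * exp (real N / (8 * real m)) \<le> 3 * real m"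
proof -
  have mr: "real m > 0" using m by simp
  define Q1 where "Q1 z = (\<Sum>n. a1 n * (z - of_real t1) ^ n)" for z
  define Q2 where "Q2 z = (\<Sum>n. a2 n * (z - of_real t2) ^ n)" for z
  define H where "H z = Q1 z - Q2 z - c * exp (\<i> * of_nat N * z)" for z
  define S where "S = ball (complex_of_real t1) (1 / (4 * real m))"
  have sub1: "S \<subseteq> ball (of_real t1) (1 / real m)"
    unfolding S_def using mr by (intro subset_ball) (simp add: field_simps)
  have sub2: "S \<subseteq> ball (of_real t2) (1 / real m)"
  proof
    fix z assume "z \<in> S"
    then have "dist (of_real t1) z < 1 / (4 * real m)" unfolding S_def by simp
    moreover have "dist (complex_of_real t2) (of_real t1) = \<bar>t1 - t2\<bar>"
      by (simp add: dist_norm norm_of_real flip: of_real_diff)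
    ultimately have "dist (complex_of_real t2) z < 1 / (4 * real m) + 1 / (8 * real m)"
      using dist_triangle[of "complex_of_real t2" z "of_real t1"] t12 by linarith
    also have "\<dots> \<le> 1 / real m" using mr by (simp add: field_simps)
    finally show "z \<in> ball (of_real t2) (1 / real m)" by simp
  qed
  have holo: "H holomorphic_on S"
    unfolding H_def Q1_def Q2_def
    by (intro holomorphic_intros holomorphic_on_subset[OF powser_holo[OF m a1] sub1]
        holomorphic_on_subset[OF powser_holo[OF m a2] sub2])
  define U where "U = complex_of_real ` {t. \<bar>t - t1\<bar> < 1 / (4 * real m)}"
  have US: "U \<subseteq> S" unfolding U_def S_def by (auto simp: dist_norm norm_of_real abs_minus_commute simp flip: of_real_diff)
  have HU: "H z = 0" if zU: "z \<in> U" for z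
  proof -
    obtain t where t: "z = of_real t" "\<bar>t - t1\<bar> < 1 / (4 * real m)" using zU unfolding U_def by auto
    have "Q1 z - Q2 z = c * ee N t" using eq[OF t(2)] unfolding Q1_def Q2_def t(1) powser_real .
    moreover have "ee N t = exp (\<i> * of_nat N * z)" unfolding ee_def t(1) by (simp add: algebra_simps)
    ultimately show ?thesis unfolding H_def by simp
  qed
  have lim: "complex_of_real t1 islimpt U"
    unfolding islimpt_approachable
  proof (intro allI impI)
    fix e :: real assume e: "e > 0"
    define q where "q = min e (1 / (4 * real m))"
    have q: "q > 0" "q \<le> e" "q \<le> 1 / (4 * real m)" unfolding q_def using e mr by simp_all
    define h where "h = q / 2"
    have h: "h > 0" "h < e" "h < 1 / (4 * real m)" unfolding h_def using q by linarith+
    show "\<exists>x'\<in>U. x' \<noteq> complex_of_real t1 \<and> dist x' (complex_of_real t1) < e"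
    proof (intro bexI[of _ "of_real (t1 + h)"] conjI)
      show "complex_of_real (t1 + h) \<in> U" unfolding U_def using h by (intro imageI) simp
      show "complex_of_real (t1 + h) \<noteq> complex_of_real t1" using h by simp
      show "dist (complex_of_real (t1 + h)) (complex_of_real t1) < e"
        using h by (simp add: dist_norm norm_of_real flip: of_real_diff)
    qed
  qed
  define s where "s = 1 / (8 * real m)"
  have s0: "s > 0" unfolding s_def using mr by simp
  define w where "w = complex_of_real t1 - \<i> * of_real s"
  have dw1: "norm (w - of_real t1) = s" unfolding w_def using s0 by (simp add: norm_mult)
  have wS: "w \<in> S" unfolding S_def using dw1 mr by (simp add: dist_norm norm_minus_commute s_def field_simps)
  have "H w = 0"
    by (rule analytic_continuation[OF holo _ _ US _ lim HU wS]) (auto simp: S_def mr m)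
  then have Hw: "c * exp (\<i> * of_nat N * w) = Q1 w - Q2 w" unfolding H_def by simp
  have nexp: "norm (exp (\<i> * of_nat N * w)) = exp (real N * s)"
    unfolding w_def by (simp add: norm_exp_eq_Re algebra_simps)
  have q1: "norm (Q1 w) \<le> real m / (1 - real m * (1 / (4 * real m)))"
    unfolding Q1_def
  proof (rule powser_summable(3)[OF m a1])
    show "norm (w - of_real t1) \<le> 1 / (4 * real m)" using dw1 mr by (simp add: s_def field_simps)
    show "real m * (1 / (4 * real m)) < 1" using mr by simp
  qed
  have q2: "norm (Q2 w) \<le> real m / (1 - real m * (1 / (4 * real m)))"
    unfolding Q2_def
  proof (rule powser_summable(3)[OF m a2])
    have "norm (w - of_real t2) \<le> norm (w - of_real t1) + norm (complex_of_real t1 - of_real t2)"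
      using norm_triangle_ineq[of "w - of_real t1" "of_real t1 - of_real t2"] by simp
    also have "norm (complex_of_real t1 - of_real t2) = \<bar>t1 - t2\<bar>"
      by (simp add: norm_of_real flip: of_real_diff)
    finally show "norm (w - of_real t2) \<le> 1 / (4 * real m)"
      using dw1 t12 mr by (simp add: s_def field_simps)
    show "real m * (1 / (4 * real m)) < 1" using mr by simp
  qed
  have e43: "real m / (1 - real m * (1 / (4 * real m))) = 4 * real m / 3" using mr by (simp add: field_simps)
  have "norm c * exp (real N * s) = norm (c * exp (\<i> * of_nat N * w))"
    using nexp by (simp add: norm_mult)
  also have "\<dots> = norm (Q1 w - Q2 w)" using Hw by simp
  also have "\<dots> \<le> norm (Q1 w) + norm (Q2 w)" by (rule norm_triangle_ineq4)
  also have "\<dots> \<le> 8 * real m / 3" using q1 q2 unfolding e43 by simp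
  finally have "norm c * exp (real N * s) \<le> 8 * real m / 3" .
  then show ?thesis unfolding s_def using mr by (simp add: field_simps)
qed



lemma exp_ge_pow:
  assumes "x \<ge> 0" "k > 0"
  shows "(x / real k) ^ k \<le> exp x"
proof -
  have "exp x = exp (real k * (x / real k))" using assms by simp
  also have "\<dots> = exp (x / real k) ^ k" by (rule exp_of_nat_mult)
  finally have e: "exp x = exp (x / real k) ^ k" .
  have "x / real k \<le> exp (x / real k)"
    using exp_ge_add_one_self[of "x / real k"] by linarith
  then have "(x / real k) ^ k \<le> exp (x / real k) ^ k"
    using assms by (intro power_mono) auto
  then show ?thesis using e by simp
qed

lemma floor_close:
  fixes x y :: real
  assumes "\<lfloor>x\<rfloor> = \<lfloor>y\<rfloor>"
  shows "\<bar>x - y\<bar> < 1"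
  using assms by linarith

lemma escape:
  fixes g :: "real \<Rightarrow> complex"
  assumes m: "m > 0" and \<eta>: "\<eta> > 0"
  shows "\<exists>b N. N \<ge> 1 \<and> norm b * real N ^ M \<le> \<eta> \<and> \<not> anal m (\<lambda>t. g t + b * ee N t)"
proof (rule ccontr)
  assume H: "\<not> ?thesis"
  have mr: "real m > 0" using m by simp
  define L :: nat where "L = nat \<lceil>16 * pi * real m\<rceil> + 1"
  have L: "16 * pi * real m < real L" unfolding L_def by linarith
  have "0 \<le> 16 * pi * real m" by simp
  then have Lpos: "real L > 0" using L by linarith
  define s where "s = 1 / (8 * real m)"
  have s: "s > 0" unfolding s_def using mr by simp
  define K where "K = real (Suc M)"
  define C where "C = (s / K) ^ Suc M"
  have C: "C > 0" unfolding C_def K_def using s by simp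
  define N :: nat where "N = nat \<lceil>3 * real m * real L / (\<eta> * C)\<rceil> + 1"
  have N1: "N \<ge> 1" unfolding N_def by simp
  have Nbig: "3 * real m * real L / (\<eta> * C) < real N" unfolding N_def by linarith
  have Npos: "real N > 0" using N1 by simp
  define \<delta> where "\<delta> = \<eta> / real N ^ M"
  have \<delta>: "\<delta> > 0" unfolding \<delta>_def using \<eta> Npos by simp
  define b where "b i = complex_of_real (real i / real L * \<delta>)" for i :: nat
  have nb: "norm (b i) = real i / real L * \<delta>" for i
    unfolding b_def norm_of_real using Lpos \<delta> by (simp add: abs_of_nonneg)
  have an: "anal m (\<lambda>t. g t + b i * ee N t)" if "i \<le> L" for i
  proof -
    have "norm (b i) * real N ^ M = real i / real L * \<eta>"
      unfolding nb \<delta>_def using Npos by simp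
    also have "\<dots> \<le> \<eta>" using that Lpos \<eta> by (simp add: field_simps)
    finally show ?thesis using H N1 by blast
  qed
  have "\<forall>i\<in>{0..L}. \<exists>p. fst p \<in> {0..2*pi} \<and> snd p \<in> cbox_set m \<and>
      (\<forall>t. \<bar>t - fst p\<bar> < 1 / (2 * real m) \<longrightarrow> (\<lambda>n. snd p n * of_real ((t - fst p) ^ n)) sums (g t + b i * ee N t))"
  proof (intro ballI)
    fix i assume "i \<in> {0..L}"
    then have "anal m (\<lambda>t. g t + b i * ee N t)" using an by simp
    then obtain t0 a where "t0 \<in> {0..2*pi}" "\<forall>n. norm (a n) \<le> real m ^ Suc n"
      "\<forall>t. \<bar>t - t0\<bar> < 1 / (2 * real m) \<longrightarrow> (\<lambda>n. a n * of_real ((t - t0) ^ n)) sums (g t + b i * ee N t)"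
      unfolding anal_def by blast
    then show "\<exists>p. fst p \<in> {0..2*pi} \<and> snd p \<in> cbox_set m \<and>
      (\<forall>t. \<bar>t - fst p\<bar> < 1 / (2 * real m) \<longrightarrow> (\<lambda>n. snd p n * of_real ((t - fst p) ^ n)) sums (g t + b i * ee N t))"
      by (intro exI[of _ "(t0, a)"]) (simp add: cbox_set_def)
  qed
  then obtain P where P0: "\<forall>i\<in>{0..L}. fst (P i) \<in> {0..2*pi} \<and> snd (P i) \<in> cbox_set m \<and>
      (\<forall>t. \<bar>t - fst (P i)\<bar> < 1 / (2 * real m) \<longrightarrow> (\<lambda>n. snd (P i) n * of_real ((t - fst (P i)) ^ n)) sums (g t + b i * ee N t))"
    by (rule bchoice[elim_format]) blast
  have P: "\<And>i. i \<in> {0..L} \<Longrightarrow> fst (P i) \<in> {0..2*pi}"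
    "\<And>i. i \<in> {0..L} \<Longrightarrow> snd (P i) \<in> cbox_set m"
    "\<And>i t. i \<in> {0..L} \<Longrightarrow> \<bar>t - fst (P i)\<bar> < 1 / (2 * real m) \<Longrightarrow>
        (\<lambda>n. snd (P i) n * of_real ((t - fst (P i)) ^ n)) sums (g t + b i * ee N t)"
    using P0 by blast+
  define f where "f i = nat \<lfloor>8 * real m * fst (P i)\<rfloor>" for i
  have fimg: "f ` {0..L} \<subseteq> {0..<L}"
  proof
    fix y assume "y \<in> f ` {0..L}"
    then obtain i where i: "i \<in> {0..L}" "y = f i" by auto
    have "8 * real m * fst (P i) \<le> 8 * real m * (2 * pi)" using P(1)[OF i(1)] mr by (intro mult_left_mono) auto
    then have "8 * real m * fst (P i) < real L" using L by simp
    then have "\<lfloor>8 * real m * fst (P i)\<rfloor> < int L" by linarith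
    then show "y \<in> {0..<L}" unfolding i(2) f_def using Lpos by (simp add: nat_less_iff)
  qed
  have "card (f ` {0..L}) \<le> card {0..<L}" by (rule card_mono[OF _ fimg]) simp
  then have "card (f ` {0..L}) < card {0..L}" by simp
  then have "\<not> inj_on f {0..L}" by (rule pigeonhole)
  then obtain i j where ij: "i \<in> {0..L}" "j \<in> {0..L}" "i \<noteq> j" "f i = f j"
    unfolding inj_on_def by blast
  have nn: "0 \<le> 8 * real m * fst (P k)" if "k \<in> {0..L}" for k
    using P(1)[OF that] mr by simp
  have "\<lfloor>8 * real m * fst (P i)\<rfloor> = \<lfloor>8 * real m * fst (P j)\<rfloor>"
    using ij(4) nn[OF ij(1)] nn[OF ij(2)] unfolding f_def by (simp add: nat_eq_iff)
  then have "\<bar>8 * real m * fst (P i) - 8 * real m * fst (P j)\<bar> < 1" by (rule floor_close)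
  then have "8 * real m * \<bar>fst (P i) - fst (P j)\<bar> < 1"
    using mr by (simp add: abs_mult flip: right_diff_distrib)
  then have t12: "\<bar>fst (P i) - fst (P j)\<bar> < 1 / (8 * real m)"
    using mr by (simp add: field_simps)
  have "norm (b i - b j) * exp (real N / (8 * real m)) \<le> 3 * real m"
  proof (rule core[OF m P(2)[OF ij(1)] P(2)[OF ij(2)] t12])
    fix t assume t: "\<bar>t - fst (P i)\<bar> < 1 / (4 * real m)"
    have t1: "\<bar>t - fst (P i)\<bar> < 1 / (2 * real m)"
      using t mr by (smt (verit) divide_strict_left_mono mult_pos_pos mult_strict_right_mono)
    have "\<bar>t - fst (P j)\<bar> < 1 / (4 * real m) + 1 / (8 * real m)" using t t12 by linarith
    also have "\<dots> < 1 / (2 * real m)" using mr by (simp add: field_simps)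
    finally have t2: "\<bar>t - fst (P j)\<bar> < 1 / (2 * real m)" .
    show "(\<Sum>n. snd (P i) n * of_real ((t - fst (P i)) ^ n)) - (\<Sum>n. snd (P j) n * of_real ((t - fst (P j)) ^ n)) =
        (b i - b j) * ee N t" (is "?l = ?r")
    proof -
      have e1: "(\<Sum>n. snd (P i) n * of_real ((t - fst (P i)) ^ n)) = g t + b i * ee N t"
        using sums_unique[OF P(3)[OF ij(1) t1]] by (rule sym)
      have e2: "(\<Sum>n. snd (P j) n * of_real ((t - fst (P j)) ^ n)) = g t + b j * ee N t"
        using sums_unique[OF P(3)[OF ij(2) t2]] by (rule sym)
      show ?thesis unfolding e1 e2 by (simp add: algebra_simps)
    qed
  qed
  moreover have "\<delta> / real L \<le> norm (b i - b j)"
  proof -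
    have d1: "b i - b j = of_real (real i / real L * \<delta> - real j / real L * \<delta>)"
      unfolding b_def by (rule of_real_diff[symmetric])
    have d2: "real i / real L * \<delta> - real j / real L * \<delta> = (real i - real j) / real L * \<delta>"
      using Lpos by (simp add: field_simps)
    have "norm (b i - b j) = \<bar>real i - real j\<bar> / real L * \<delta>"
      unfolding d1 d2 norm_of_real using \<delta> Lpos by (simp add: abs_mult)
    moreover have "1 \<le> \<bar>real i - real j\<bar>" using ij(3) by linarith
    ultimately show ?thesis using \<delta> Lpos by (simp add: field_simps)
  qed
  moreover have "real N ^ Suc M * C \<le> exp (real N / (8 * real m))"
  proof -
    have "(real N * s / K) ^ Suc M \<le> exp (real N * s)"
      unfolding K_def using s Npos by (intro exp_ge_pow) auto
    moreover have "(real N * s / K) ^ Suc M = real N ^ Suc M * C"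
      unfolding C_def by (simp add: power_mult_distrib flip: power_divide times_divide_eq_right)
    moreover have "real N * s = real N / (8 * real m)" unfolding s_def by simp
    ultimately show ?thesis by simp
  qed
  ultimately have "\<delta> / real L * (real N ^ Suc M * C) \<le> 3 * real m"
    by (smt (verit, best) \<delta> Lpos C Npos divide_pos_pos mult_mono mult_nonneg_nonneg norm_ge_zero zero_le_power)
  moreover have "\<delta> / real L * (real N ^ Suc M * C) = \<eta> * real N * C / real L"
    unfolding \<delta>_def using Npos by (simp add: field_simps)
  moreover have "3 * real m < \<eta> * real N * C / real L"
  proof -
    have "3 * real m * real L < real N * (\<eta> * C)"
      using Nbig \<eta> C by (simp add: pos_divide_less_eq)
    then show ?thesis using Lpos by (simp add: field_simps)
  qed
  ultimately show False by linarith
qed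



lemma Ck_open_curve: "Ck_open k \<gamma> (Ck_curve k \<gamma>)"
  unfolding Ck_open_def Ck_nbhd_def by (auto intro!: exI[of _ "1::real"])

lemma topspace_Ck: "topspace (Ck_topology k \<gamma>) = Ck_curve k \<gamma>"
proof
  show "topspace (Ck_topology k \<gamma>) \<subseteq> Ck_curve k \<gamma>"
    using openin_topspace[of "Ck_topology k \<gamma>"] unfolding openin_Ck_topology Ck_open_def by blast
  show "Ck_curve k \<gamma> \<subseteq> topspace (Ck_topology k \<gamma>)"
    by (rule openin_subset) (simp add: openin_Ck_topology Ck_open_curve)
qed

lemma seminorm_le:
  assumes "\<And>\<theta>. norm (iter_deriv l (\<lambda>t. w (\<gamma> t)) \<theta>) \<le> B"
  shows "seminorm_curve \<gamma> l w \<le> B"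
  unfolding seminorm_curve_def by (rule cSUP_least) (use assms in auto)

lemma seminorm0_ge:
  assumes "periodic2pi (\<lambda>t. w (\<gamma> t))" "continuous_on UNIV (\<lambda>t. w (\<gamma> t))"
  shows "norm (w (\<gamma> \<theta>)) \<le> seminorm_curve \<gamma> 0 w"
proof -
  obtain B where B: "\<And>t. norm (w (\<gamma> t)) \<le> B" using periodic_bounded[OF assms] by blast
  show ?thesis unfolding seminorm_curve_def
    by (rule cSUP_upper2[of _ _ \<theta>]) (use B in \<open>auto intro!: bdd_aboveI2\<close>)
qed

lemma analytic_imp_anal:
  assumes per: "periodic2pi h" and \<delta>: "\<delta> > 0"
    and sm: "\<And>t. \<bar>t - t0\<bar> < \<delta> \<Longrightarrow> (\<lambda>n. a n * complex_of_real ((t - t0) ^ n)) sums h t"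
  shows "\<exists>m>0. anal m h"
proof -
  obtain n0::int where n0: "t0 - 2 * pi * of_int n0 \<in> {0..<2*pi}" using reduce_period by blast
  define t1 where "t1 = t0 - 2 * pi * of_int n0"
  have sm1: "(\<lambda>n. a n * complex_of_real ((t - t1) ^ n)) sums h t" if "\<bar>t - t1\<bar> < \<delta>" for t
  proof -
    have d: "t + 2 * pi * of_int n0 - t0 = t - t1" unfolding t1_def by simp
    have "(\<lambda>n. a n * of_real ((t + 2 * pi * of_int n0 - t0) ^ n)) sums h (t + 2 * pi * of_int n0)"
      by (rule sm) (use d that in simp)
    then show ?thesis unfolding d periodic_int[OF per] .
  qed
  define r where "r = \<delta> / 2"
  have r: "r > 0" "r < \<delta>" unfolding r_def using \<delta> by auto
  have "summable (\<lambda>n. a n * complex_of_real ((t1 + r - t1) ^ n))"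
    using sm1[of "t1 + r"] r by (auto simp: sums_iff)
  then have "(\<lambda>n. a n * complex_of_real (r ^ n)) \<longlonglongrightarrow> 0" by (simp add: summable_LIMSEQ_zero)
  then have "Bseq (\<lambda>n. a n * complex_of_real (r ^ n))" by (rule convergent_imp_Bseq[OF convergentI])
  then obtain B where B: "B > 0" "\<And>n. norm (a n * complex_of_real (r ^ n)) \<le> B" by (auto simp: Bseq_def)
  define m :: nat where "m = nat \<lceil>max B (2 / \<delta>)\<rceil> + 1"
  have mB: "B \<le> real m" and m\<delta>: "2 / \<delta> \<le> real m" and mpos: "m > 0" unfolding m_def by linarith+
  have "1 / r = 2 / \<delta>" unfolding r_def by simp
  then have mr: "1 / r \<le> real m" using m\<delta> by simp
  have abnd: "norm (a n) \<le> real m ^ Suc n" for n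
  proof -
    have "norm (a n) * r ^ n \<le> B" using B(2)[of n] r by (simp add: norm_mult norm_power)
    then have "norm (a n) \<le> B * (1 / r) ^ n" using r by (simp add: field_simps)
    also have "\<dots> \<le> real m * real m ^ n"
      using mB mr B r by (intro mult_mono power_mono) auto
    finally show ?thesis by simp
  qed
  have "1 / (2 * real m) < \<delta>"
  proof -
    have "real m * \<delta> \<ge> 2" using m\<delta> \<delta> by (simp add: field_simps)
    then show ?thesis using mpos \<delta> by (simp add: field_simps)
  qed
  then have "anal m h" unfolding anal_def
  proof (intro bexI[of _ t1] exI[of _ a] conjI allI impI)
    show "t1 \<in> {0..2*pi}" using n0 unfolding t1_def by auto
    show "norm (a n) \<le> real m ^ Suc n" for n by (rule abnd)
    fix t assume "\<bar>t - t1\<bar> < 1 / (2 * real m)" "1 / (2 * real m) < \<delta>"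
    then show "(\<lambda>n. a n * complex_of_real ((t - t1) ^ n)) sums h t" by (intro sm1) linarith
  qed
  then show ?thesis using mpos by blast
qed

lemma anal_imp_analytic:
  assumes "anal m h" "m > 0" "h = (\<lambda>t. f (\<gamma> t))"
  shows "\<exists>t0. real_analytic_at_curve \<gamma> f t0"
  using assms unfolding anal_def real_analytic_at_curve_def
  by (metis divide_pos_pos mult_pos_pos of_nat_0_less_iff zero_less_numeral zero_less_one)

lemma nowhere_iff:
  assumes "analytic_jordan_curve \<gamma>"
  shows "(\<forall>t0. \<not> real_analytic_at_curve \<gamma> f t0) \<longleftrightarrow> (\<forall>j. \<not> anal (Suc j) (\<lambda>t. f (\<gamma> t)))"
proof
  assume "\<forall>t0. \<not> real_analytic_at_curve \<gamma> f t0"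
  then show "\<forall>j. \<not> anal (Suc j) (\<lambda>t. f (\<gamma> t))" using anal_imp_analytic[of "Suc _"] by blast
next
  assume H: "\<forall>j. \<not> anal (Suc j) (\<lambda>t. f (\<gamma> t))"
  show "\<forall>t0. \<not> real_analytic_at_curve \<gamma> f t0"
  proof (intro allI notI)
    fix t0 assume "real_analytic_at_curve \<gamma> f t0"
    then obtain a \<delta> where "\<delta> > 0" "\<And>t. \<bar>t - t0\<bar> < \<delta> \<Longrightarrow> (\<lambda>n. a n * complex_of_real ((t - t0) ^ n)) sums f (\<gamma> t)"
      unfolding real_analytic_at_curve_def by blast
    from analytic_imp_anal[OF Ck_curve_periodic[OF assms] this] obtain m where "m > 0" "anal m (\<lambda>t. f (\<gamma> t))"
      by blast
    then show False using H by (metis gr0_implies_Suc)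
  qed
qed

definition Oset :: "enat \<Rightarrow> (real \<Rightarrow> complex) \<Rightarrow> nat \<Rightarrow> (complex \<Rightarrow> complex) set" where
  "Oset k \<gamma> j = {f \<in> Ck_curve k \<gamma>. \<not> anal (Suc j) (\<lambda>t. f (\<gamma> t))}"

lemma Oset_open:
  assumes "analytic_jordan_curve \<gamma>"
  shows "openin (Ck_topology k \<gamma>) (Oset k \<gamma> j)"
  unfolding openin_Ck_topology Ck_open_def
proof (intro conjI ballI)
  show "Oset k \<gamma> j \<subseteq> Ck_curve k \<gamma>" unfolding Oset_def by blast
  fix u assume u: "u \<in> Oset k \<gamma> j"
  then obtain e where e: "e > 0" "\<And>r. (\<forall>t. norm (r t) < e) \<Longrightarrow> \<not> anal (Suc j) (\<lambda>t. u (\<gamma> t) + r t)"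
    using anal_robust[of "Suc j" "\<lambda>t. u (\<gamma> t)"] unfolding Oset_def by auto
  have "Ck_nbhd k \<gamma> u 0 e \<subseteq> Oset k \<gamma> j"
  proof
    fix f assume f: "f \<in> Ck_nbhd k \<gamma> u 0 e"
    then have fC: "f \<in> Ck_curve k \<gamma>" and sn: "seminorm_curve \<gamma> 0 (\<lambda>z. f z - u z) < e"
      unfolding Ck_nbhd_def by (auto simp: zero_enat_def[symmetric])
    have uC: "u \<in> Ck_curve k \<gamma>" using u unfolding Oset_def by blast
    have cont: "continuous_on UNIV (\<lambda>t. f (\<gamma> t) - u (\<gamma> t))"
      using fC uC unfolding Ck_curve_def by (auto intro!: continuous_on_diff dest: Ck_real_cont0)
    have nb: "\<forall>t. norm (f (\<gamma> t) - u (\<gamma> t)) < e"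
    proof
      fix t show "norm (f (\<gamma> t) - u (\<gamma> t)) < e"
      using seminorm0_ge[of "\<lambda>z. f z - u z" \<gamma> t] Ck_curve_periodic[OF assms, of "\<lambda>z. f z - u z"] cont sn
      by simp
    qed
    have "\<not> anal (Suc j) (\<lambda>t. u (\<gamma> t) + (f (\<gamma> t) - u (\<gamma> t)))" by (rule e(2)[OF nb])
    then show "f \<in> Oset k \<gamma> j" using fC unfolding Oset_def by simp
  qed
  then show "\<exists>N \<epsilon>. 0 < \<epsilon> \<and> Ck_nbhd k \<gamma> u N \<epsilon> \<subseteq> Oset k \<gamma> j" using e(1) by blast
qed

lemma S_eq_Inter:
  assumes "analytic_jordan_curve \<gamma>"
  shows "{f \<in> Ck_curve k \<gamma>. \<forall>t0. \<not> real_analytic_at_curve \<gamma> f t0} = \<Inter> (range (Oset k \<gamma>))"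
  using nowhere_iff[OF assms] unfolding Oset_def by auto

lemma S_gdelta:
  assumes "analytic_jordan_curve \<gamma>"
  shows "gdelta_in (Ck_topology k \<gamma>) {f \<in> Ck_curve k \<gamma>. \<forall>t0. \<not> real_analytic_at_curve \<gamma> f t0}"
  unfolding S_eq_Inter[OF assms]
  by (rule gdelta_in_Inter) (auto intro: open_imp_gdelta_in Oset_open[OF assms])



definition Qp :: "nat \<Rightarrow> (real \<Rightarrow> complex) \<Rightarrow> nat \<Rightarrow> real \<Rightarrow> complex \<times> nat \<times> real \<Rightarrow> bool" where
  "Qp Nn g j \<rho> p \<longleftrightarrow> snd (snd p) > 0 \<and> fst (snd p) \<ge> 1 \<and>
     norm (fst p) * real (fst (snd p)) ^ (max Nn j) \<le> \<rho> / 2 ^ Suc j \<and>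
     (\<forall>r. (\<forall>t. norm (r t) < snd (snd p)) \<longrightarrow> \<not> anal (Suc j) (\<lambda>t. g t + fst p * ee (fst (snd p)) t + r t))"

definition stp :: "nat \<Rightarrow> (real \<Rightarrow> complex) \<Rightarrow> nat \<Rightarrow> real \<Rightarrow> complex \<times> nat \<times> real" where
  "stp Nn g j \<rho> = (SOME p. Qp Nn g j \<rho> p)"

lemma stp_prop:
  assumes "\<rho> > 0"
  shows "Qp Nn g j \<rho> (stp Nn g j \<rho>)"
proof -
  have "\<rho> / 2 ^ Suc j > 0" using assms by simp
  from escape[OF _ this, of "Suc j" "max Nn j" g] obtain b N where
    bN: "N \<ge> 1" "norm b * real N ^ max Nn j \<le> \<rho> / 2 ^ Suc j" "\<not> anal (Suc j) (\<lambda>t. g t + b * ee N t)"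
    by auto
  from anal_robust[OF _ bN(3)] obtain e where
    e: "e > 0" "\<forall>r. (\<forall>t. norm (r t) < e) \<longrightarrow> \<not> anal (Suc j) (\<lambda>t. g t + b * ee N t + r t)"
    by auto
  have "Qp Nn g j \<rho> (b, N, e)" unfolding Qp_def using bN e by simp
  then show ?thesis unfolding stp_def by (rule someI)
qed

primrec st :: "nat \<Rightarrow> (real \<Rightarrow> complex) \<Rightarrow> real \<Rightarrow> nat \<Rightarrow> (nat \<Rightarrow> complex) \<times> (nat \<Rightarrow> nat) \<times> real" where
  "st Nn g0 \<epsilon> 0 = (\<lambda>_. 0, \<lambda>_. 0, \<epsilon> / 2)"
| "st Nn g0 \<epsilon> (Suc j) =
     (let B = fst (st Nn g0 \<epsilon> j); Nf = fst (snd (st Nn g0 \<epsilon> j)); \<rho> = snd (snd (st Nn g0 \<epsilon> j));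
          p = stp Nn (\<lambda>t. g0 t + (\<Sum>i<j. B i * ee (Nf i) t)) j \<rho>
      in (B(j := fst p), Nf(j := fst (snd p)), min \<rho> (snd (snd p))))"

lemma st_B: "i < j \<Longrightarrow> fst (st Nn g0 \<epsilon> j) i = fst (st Nn g0 \<epsilon> (Suc i)) i"
proof (induction j)
  case 0 then show ?case by simp
next
  case (Suc j)
  show ?case
  proof (cases "i = j")
    case True then show ?thesis by simp
  next
    case False
    then have "i < j" using Suc.prems by simp
    then show ?thesis using Suc.IH False by (simp add: Let_def)
  qed
qed

lemma st_N: "i < j \<Longrightarrow> fst (snd (st Nn g0 \<epsilon> j)) i = fst (snd (st Nn g0 \<epsilon> (Suc i))) i"
proof (induction j)
  case 0 then show ?case by simp
next
  case (Suc j)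
  show ?case
  proof (cases "i = j")
    case True then show ?thesis by simp
  next
    case False
    then have "i < j" using Suc.prems by simp
    then show ?thesis using Suc.IH False by (simp add: Let_def)
  qed
qed

lemma dense_point:
  assumes \<gamma>: "analytic_jordan_curve \<gamma>" and u: "u \<in> Ck_curve k \<gamma>" and \<epsilon>: "\<epsilon> > 0"
  shows "\<exists>v. v \<in> Ck_nbhd k \<gamma> u Nn \<epsilon> \<and> (\<forall>t0. \<not> real_analytic_at_curve \<gamma> v t0)"
proof -
  define g0 where "g0 t = u (\<gamma> t)" for t
  define S where "S = st Nn g0 \<epsilon>"
  define bb where "bb i = fst (S (Suc i)) i" for i
  define NN where "NN i = fst (snd (S (Suc i))) i" for i
  define \<rho> where "\<rho> j = snd (snd (S j))" for j
  define G where "G j t = g0 t + (\<Sum>i<j. bb i * ee (NN i) t)" for j t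
  define p where "p j = stp Nn (G j) j (\<rho> j)" for j
  have Sj: "S (Suc j) = ((fst (S j))(j := fst (p j)), (fst (snd (S j)))(j := fst (snd (p j))), min (\<rho> j) (snd (snd (p j))))" for j
  proof -
    have "fst (S j) i * ee (fst (snd (S j)) i) t = bb i * ee (NN i) t" if "i \<in> {..<j}" for i t
      unfolding S_def bb_def NN_def using st_B[of i j Nn g0 \<epsilon>] st_N[of i j Nn g0 \<epsilon>] that by simp
    then have "(\<lambda>t. g0 t + (\<Sum>i<j. fst (S j) i * ee (fst (snd (S j)) i) t)) = G j"
      unfolding G_def by (intro ext arg_cong2[where f="(+)"] refl sum.cong) auto
    then show ?thesis unfolding S_def p_def \<rho>_def by (simp add: Let_def)
  qed
  have bbj: "bb j = fst (p j)" and NNj: "NN j = fst (snd (p j))" and \<rho>S: "\<rho> (Suc j) = min (\<rho> j) (snd (snd (p j)))" for j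
    unfolding bb_def NN_def using Sj[of j] by (simp_all add: \<rho>_def)
  have \<rho>pos: "\<rho> j > 0 \<and> \<rho> j \<le> \<epsilon> / 2" for j
  proof (induction j)
    case 0 then show ?case using \<epsilon> by (simp add: \<rho>_def S_def)
  next
    case (Suc j)
    then have "Qp Nn (G j) j (\<rho> j) (p j)" unfolding p_def by (intro stp_prop) simp
    then show ?case using Suc \<rho>S[of j] unfolding Qp_def by (auto simp: min_def)
  qed
  have Q: "Qp Nn (G j) j (\<rho> j) (p j)" for j unfolding p_def using \<rho>pos by (intro stp_prop) simp
  have N1: "NN j \<ge> 1" for j using Q[of j] unfolding Qp_def NNj by simp
  have bnd: "norm (bb j) * real (NN j) ^ (max Nn j) \<le> \<rho> j / 2 ^ Suc j" for j
    using Q[of j] unfolding Qp_def bbj NNj by simp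
  have esc: "\<And>r :: real \<Rightarrow> complex. (\<forall>t. norm (r t) < \<rho> (Suc j)) \<Longrightarrow> \<not> anal (Suc j) (\<lambda>t. G j t + bb j * ee (NN j) t + r t)" for j
  proof -
    fix r :: "real \<Rightarrow> complex" assume "\<forall>t. norm (r t) < \<rho> (Suc j)"
    then have "\<forall>t. norm (r t) < snd (snd (p j))" using \<rho>S[of j] by (metis min.strict_boundedE)
    then show "\<not> anal (Suc j) (\<lambda>t. G j t + bb j * ee (NN j) t + r t)"
      using Q[of j] unfolding Qp_def bbj NNj by blast
  qed
  have \<rho>mono: "\<rho> (i + j) \<le> \<rho> j" for i j
  proof (induction i)
    case 0 then show ?case by simp
  next
    case (Suc i) then show ?case using \<rho>S[of "i + j"] by simp
  qed
  have tb: "norm (bb i) * real (NN i) ^ l \<le> \<rho> i / 2 ^ Suc i" if "l \<le> max Nn i" for i l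
  proof -
    have "real (NN i) ^ l \<le> real (NN i) ^ max Nn i" using N1[of i] that by (intro power_increasing) auto
    then have "norm (bb i) * real (NN i) ^ l \<le> norm (bb i) * real (NN i) ^ max Nn i"
      by (intro mult_left_mono) auto
    then show ?thesis using bnd[of i] by linarith
  qed
  have tb2: "norm (bb i) * real (NN i) ^ l \<le> \<epsilon> / 2 * (1/2) ^ Suc i" if "l \<le> max Nn i" for i l
  proof -
    have "\<rho> i / 2 ^ Suc i \<le> \<epsilon> / 2 / 2 ^ Suc i" using \<rho>pos[of i] by (intro divide_right_mono) auto
    then show ?thesis using tb[OF that] by (simp add: power_divide)
  qed
  have geo: "summable (\<lambda>i. \<epsilon> / 2 * (1/2::real) ^ Suc i)"
    using power_half_series summable_mult sums_summable by blast
  have summ: "summable (\<lambda>i. norm (bb i) * real (NN i) ^ l)" for l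
    by (rule summable_comparison_test'[OF geo, of l]) (use tb2 in \<open>auto intro!: tb2\<close>)
  define H where "H = ser bb NN 0"
  have H: "H t = (\<Sum>i. bb i * ee (NN i) t)" for t unfolding H_def ser0_eq ..
  define g where "g t = g0 t + H t" for t
  have g0C: "Ck_real k g0" using u unfolding Ck_curve_def g0_def by simp
  have gC: "Ck_real k g" unfolding g_def H_def by (rule Ck_real_add'[OF g0C Ck_real_ser[OF summ]])
  have gper: "periodic2pi g"
    using Ck_curve_periodic[OF \<gamma>, of u] ser_periodic[OF summ] unfolding g_def H_def g0_def periodic2pi_def
    by simp
  define v where "v = lift \<gamma> g"
  have vC: "v \<in> Ck_curve k \<gamma>" unfolding v_def by (rule lift_in_Ck[OF \<gamma> gper gC])
  have vg: "v (\<gamma> t) = g t" for t unfolding v_def by (rule lift_eq[OF \<gamma> gper])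
  have diff: "(\<lambda>t. v (\<gamma> t) - u (\<gamma> t)) = H" using vg unfolding g_def g0_def by auto
  have "v \<in> Ck_nbhd k \<gamma> u Nn \<epsilon>"
    unfolding Ck_nbhd_def
  proof (intro CollectI conjI allI impI vC)
    fix l assume l: "l \<le> Nn \<and> enat l \<le> k"
    have "seminorm_curve \<gamma> l (\<lambda>z. v z - u z) \<le> \<epsilon> / 2"
    proof (rule seminorm_le)
      fix \<theta>
      have "iter_deriv l (\<lambda>t. v (\<gamma> t) - u (\<gamma> t)) \<theta> = ser bb NN l \<theta>"
        unfolding diff H_def iter_deriv_ser[OF summ] ..
      also have "norm \<dots> \<le> (\<Sum>i. norm (bb i) * real (NN i) ^ l)" by (rule ser_norm_le[OF summ])
      also have "\<dots> \<le> (\<Sum>i. \<epsilon> / 2 * (1/2) ^ Suc i)"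
      proof (rule suminf_le[OF _ summ geo])
        fix i show "norm (bb i) * real (NN i) ^ l \<le> \<epsilon> / 2 * (1/2) ^ Suc i" by (rule tb2) (use l in auto)
      qed
      also have "\<dots> = \<epsilon> / 2"
        using sums_unique[OF sums_mult[OF power_half_series, of "\<epsilon>/2"]] by simp
      finally show "norm (iter_deriv l (\<lambda>t. v (\<gamma> t) - u (\<gamma> t)) \<theta>) \<le> \<epsilon> / 2" .
    qed
    then show "seminorm_curve \<gamma> l (\<lambda>z. v z - u z) < \<epsilon>" using \<epsilon> by simp
  qed
  moreover have "\<forall>t0. \<not> real_analytic_at_curve \<gamma> v t0"
    unfolding nowhere_iff[OF \<gamma>]
  proof
    fix j
    define f where "f i t = bb i * ee (NN i) t" for i t
    define r where "r t = (\<Sum>n. f (n + Suc j) t)" for t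
    have sm0: "summable (\<lambda>i. f i t)" for t
      using ser_summable[OF summ[of 0], of t] unfolding f_def by simp
    have vsplit: "v (\<gamma> t) = G j t + bb j * ee (NN j) t + r t" for t
    proof -
      have "H t = (\<Sum>n. f (n + Suc j) t) + (\<Sum>i<Suc j. f i t)"
        unfolding H f_def[symmetric] by (rule suminf_split_initial_segment[OF sm0])
      then show ?thesis unfolding vg g_def G_def r_def by (simp add: f_def algebra_simps)
    qed
    have nbi: "norm (bb (n + Suc j)) \<le> \<rho> (Suc j) / 2 * (1/2) ^ Suc n" for n
    proof -
      define i where "i = n + Suc j"
      have "norm (bb i) \<le> \<rho> i / 2 ^ Suc i" using tb[of 0 i] by simp
      also have "\<rho> i / 2 ^ Suc i \<le> \<rho> (Suc j) / 2 ^ Suc (Suc n)"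
      proof (rule frac_le)
        show "0 \<le> \<rho> (Suc j)" using \<rho>pos[of "Suc j"] by simp
        show "\<rho> i \<le> \<rho> (Suc j)" unfolding i_def by (rule \<rho>mono)
        show "(0::real) < 2 ^ Suc (Suc n)" by simp
        show "(2::real) ^ Suc (Suc n) \<le> 2 ^ Suc i" unfolding i_def by (intro power_increasing) auto
      qed
      also have "\<rho> (Suc j) / 2 ^ Suc (Suc n) = \<rho> (Suc j) / 2 * (1/2) ^ Suc n"
        by (simp add: power_divide)
      finally show ?thesis unfolding i_def .
    qed
    have geo2: "(\<lambda>n. \<rho> (Suc j) / 2 * (1/2::real) ^ Suc n) sums (\<rho> (Suc j) / 2 * 1)"
      by (rule sums_mult[OF power_half_series])
    have rb: "\<forall>t. norm (r t) < \<rho> (Suc j)"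
    proof
      fix t
      have nf: "norm (f (n + Suc j) t) \<le> \<rho> (Suc j) / 2 * (1/2) ^ Suc n" for n
        using nbi[of n] unfolding f_def by (simp add: norm_mult)
      have sn: "summable (\<lambda>n. norm (f (n + Suc j) t))"
        by (rule summable_comparison_test'[OF sums_summable[OF geo2], of 0]) (use nf in simp)
      have "norm (r t) \<le> (\<Sum>n. norm (f (n + Suc j) t))" unfolding r_def by (rule summable_norm[OF sn])
      also have "\<dots> \<le> (\<Sum>n. \<rho> (Suc j) / 2 * (1/2) ^ Suc n)"
        by (rule suminf_le[OF nf sn sums_summable[OF geo2]])
      also have "\<dots> = \<rho> (Suc j) / 2" using sums_unique[OF geo2] by simp
      also have "\<dots> < \<rho> (Suc j)" using \<rho>pos[of "Suc j"] by simp
      finally show "norm (r t) < \<rho> (Suc j)" .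
    qed
    have "(\<lambda>t. v (\<gamma> t)) = (\<lambda>t. G j t + bb j * ee (NN j) t + r t)" using vsplit by auto
    then show "\<not> anal (Suc j) (\<lambda>t. v (\<gamma> t))" using esc[OF rb] by simp
  qed
  ultimately show ?thesis by blast
qed

theorem theorem5p11:
  fixes \<gamma> :: "real \<Rightarrow> complex" and k :: enat
  assumes "analytic_jordan_curve \<gamma>"
  defines "S \<equiv> {f \<in> Ck_curve k \<gamma>. \<forall>t0. \<not> real_analytic_at_curve \<gamma> f t0}"
  shows "gdelta_in (Ck_topology k \<gamma>) S \<and> (Ck_topology k \<gamma>) closure_of S = topspace (Ck_topology k \<gamma>)"
proof
  show "gdelta_in (Ck_topology k \<gamma>) S" unfolding S_def by (rule S_gdelta[OF assms(1)])
  show "Ck_topology k \<gamma> closure_of S = topspace (Ck_topology k \<gamma>)"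
  proof
    show "Ck_topology k \<gamma> closure_of S \<subseteq> topspace (Ck_topology k \<gamma>)"
      by (rule closure_of_subset_topspace)
    show "topspace (Ck_topology k \<gamma>) \<subseteq> Ck_topology k \<gamma> closure_of S"
    proof
      fix x assume x: "x \<in> topspace (Ck_topology k \<gamma>)"
      then have xC: "x \<in> Ck_curve k \<gamma>" by (simp add: topspace_Ck)
      show "x \<in> Ck_topology k \<gamma> closure_of S"
        unfolding in_closure_of
      proof (intro conjI allI impI x)
        fix T assume T: "x \<in> T \<and> openin (Ck_topology k \<gamma>) T"
        then obtain N \<epsilon> where N: "0 < \<epsilon>" "Ck_nbhd k \<gamma> x N \<epsilon> \<subseteq> T"
          unfolding openin_Ck_topology Ck_open_def by blast
        from dense_point[OF assms(1) xC N(1), of N] obtain v where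
          v: "v \<in> Ck_nbhd k \<gamma> x N \<epsilon>" "\<forall>t0. \<not> real_analytic_at_curve \<gamma> v t0" by blast
        have "v \<in> Ck_curve k \<gamma>" using v(1) unfolding Ck_nbhd_def by blast
        then have "v \<in> S" unfolding S_def using v(2) by blast
        then show "\<exists>y. y \<in> S \<and> y \<in> T" using v(1) N(2) by blast
      qed
    qed
  qed
qed

end
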